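(* Let $K\subset\mathbb E$ be a regular cone, $F$ a $\nu$-normal barrier for $K$, and $H:\mathbb E\to\mathbb E^*$ a self-adjoint positive definite linear operator. Suppose $u\in\mathbb E$ satisfies $\mathcal E_H(u):=\{w\in\mathbb E:\langle H(w-u),w-u\rangle\le 1\}\subseteq K$, and that for some $x\in\operatorname{int}K$ we have $\langle\nabla F(x),u-x\rangle\ge 0$. Then $H\succeq \frac{1}{4\nu^2}\nabla^2F(x)$. In particular (taking $H$ to be a suitable multiple of $\nabla^2F(u)$ via the Dikin ellipsoid), if $x,u\in\operatorname{int}K$ and $\langle\nabla F(x),u-x\rangle\ge0$ then $\nabla^2F(u)\succeq\frac1{4\nu^2}\nabla^2F(x)$; and if $x\in\operatorname{int}K$, $u\in K$, then $\nabla^2F(x+u)\preceq 4\nu^2\nabla^2F(x)$.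
   Context: $\mathbb E$ is a finite-dimensional real vector space with dual $\mathbb E^*$ and pairing $\langle s,x\rangle$. A cone $K\subset\mathbb E$ is regular if it is closed, convex, pointed, with nonempty interior. A $\nu$-normal barrier for $K$ is a function $F:\operatorname{int}K\to\mathbb R$ which is a $\nu$-self-concordant barrier (i.e. $|D^3F(x)[h,h,h]|\le 2\langle\nabla^2F(x)h,h\rangle^{3/2}$ for all $x\in\operatorname{int}K,h\in\mathbb E$, $F(x)\to\infty$ as $x\to\partial K$, and $\langle\nabla F(x),[\nabla^2F(x)]^{-1}\nabla F(x)\rangle\le\nu$) and is logarithmically homogeneous: $F(\tau x)=F(x)-\nu\ln\tau$ for all $x\in\operatorname{int}K$, $\tau>0$. For self-adjoint operators $P,R:\mathbb E\to\mathbb E^*$, $P\preceq R$ means $\langle (R-P)h,h\rangle\ge0$ for all $h$. *)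

theory Defs
  imports "HOL-Analysis.Analysis"
begin

(* E is modelled by a Euclidean space 'a; its dual E* is identified with 'a via the
   inner product, so the pairing <s,x> is s \<bullet> x and operators E -> E* are maps 'a => 'a. *)

definition regular_cone :: "'a::euclidean_space set \<Rightarrow> bool" where
  "regular_cone K \<longleftrightarrow> cone K \<and> closed K \<and> convex K \<and>
     K \<inter> uminus ` K = {0} \<and> interior K \<noteq> {}"

definition self_adjoint :: "('a::euclidean_space \<Rightarrow> 'a) \<Rightarrow> bool" where
  "self_adjoint H \<longleftrightarrow> linear H \<and> (\<forall>x y. H x \<bullet> y = x \<bullet> H y)"

definition pos_def_op :: "('a::euclidean_space \<Rightarrow> 'a) \<Rightarrow> bool" where
  "pos_def_op H \<longleftrightarrow> self_adjoint H \<and> (\<forall>h. h \<noteq> 0 \<longrightarrow> H h \<bullet> h > 0)"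

definition loewner_le :: "('a::euclidean_space \<Rightarrow> 'a) \<Rightarrow> ('a \<Rightarrow> 'a) \<Rightarrow> bool" where
  "loewner_le P R \<longleftrightarrow> (\<forall>h. P h \<bullet> h \<le> R h \<bullet> h)"

definition grad_hess :: "'a::euclidean_space set \<Rightarrow> ('a \<Rightarrow> real) \<Rightarrow> ('a \<Rightarrow> 'a) \<Rightarrow> ('a \<Rightarrow> 'a \<Rightarrow> 'a) \<Rightarrow> bool" where
  "grad_hess K F gF HF \<longleftrightarrow>
     (\<forall>x\<in>interior K. (F has_derivative (\<lambda>h. gF x \<bullet> h)) (at x)
                    \<and> (gF has_derivative HF x) (at x))"

(* nu-self-concordant barrier; the third derivative D^3F(x)[h,h,h] is the derivative
   at x, in direction h, of y \<mapsto> <\<nabla>^2F(y)h,h> *)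
definition self_conc_barrier ::
  "'a::euclidean_space set \<Rightarrow> real \<Rightarrow> ('a \<Rightarrow> real) \<Rightarrow> ('a \<Rightarrow> 'a) \<Rightarrow> ('a \<Rightarrow> 'a \<Rightarrow> 'a) \<Rightarrow> bool" where
  "self_conc_barrier K \<nu> F gF HF \<longleftrightarrow>
     grad_hess K F gF HF \<and> convex_on (interior K) F \<and>
     (\<forall>x\<in>interior K. \<forall>h. \<exists>D3. ((\<lambda>y. HF y h \<bullet> h) has_derivative D3) (at x) \<and>
          \<bar>D3 h\<bar> \<le> 2 * (HF x h \<bullet> h) powr (3/2)) \<and>
     (\<forall>b\<in>frontier K. filterlim F at_top (at b within interior K)) \<and>
     (\<forall>x\<in>interior K. bij (HF x) \<and> gF x \<bullet> inv (HF x) (gF x) \<le> \<nu>)"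

definition normal_barrier ::
  "'a::euclidean_space set \<Rightarrow> real \<Rightarrow> ('a \<Rightarrow> real) \<Rightarrow> ('a \<Rightarrow> 'a) \<Rightarrow> ('a \<Rightarrow> 'a \<Rightarrow> 'a) \<Rightarrow> bool" where
  "normal_barrier K \<nu> F gF HF \<longleftrightarrow>
     self_conc_barrier K \<nu> F gF HF \<and>
     (\<forall>x\<in>interior K. \<forall>\<tau>>0. F (\<tau> *\<^sub>R x) = F x - \<nu> * ln \<tau>)"

definition ellipsoid :: "('a::euclidean_space \<Rightarrow> 'a) \<Rightarrow> 'a \<Rightarrow> 'a set" where
  "ellipsoid H u = {w. H (w - u) \<bullet> (w - u) \<le> 1}"

end

theory Submission
  imports Defs
begin

lemma int_scale:
  fixes K :: "'a::real_normed_vector set"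
  assumes "cone K" "x \<in> interior K" "c > 0"
  shows "c *\<^sub>R x \<in> interior K"
proof -
  have "open ((\<lambda>x. c *\<^sub>R x) ` interior K)" using open_scaling[of c "interior K"] assms by simp
  moreover have "(\<lambda>x. c *\<^sub>R x) ` interior K \<subseteq> K"
  proof
    fix w assume "w \<in> (\<lambda>x. c *\<^sub>R x) ` interior K"
    then obtain x' where "x' \<in> interior K" "w = c *\<^sub>R x'" by blast
    thus "w \<in> K" using interior_subset mem_cone[OF assms(1)] assms(3) by fastforce
  qed
  ultimately show ?thesis using assms interior_maximal by blast
qed

lemma int_add:
  fixes K :: "'a::real_normed_vector set"
  assumes "cone K" "convex K" "x \<in> interior K" "y \<in> K"
  shows "x + y \<in> interior K"
proof -
  have "open ((\<lambda>x. y + x) ` interior K)" using open_translation[of "interior K" y] by simp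
  moreover have "(\<lambda>x. y + x) ` interior K \<subseteq> K"
    using assms interior_subset convex_cone by blast
  moreover have "x + y \<in> (\<lambda>x. y + x) ` interior K" using assms by (auto simp: add.commute)
  ultimately show ?thesis using interior_maximal by blast
qed

lemma line_deriv:
  assumes "(f has_derivative f') (at (z + t *\<^sub>R y))"
  shows "((\<lambda>t. f (z + t *\<^sub>R y)) has_real_derivative f' y) (at t)"
proof -
  have l: "linear f'" using assms has_derivative_linear by blast
  have "((\<lambda>t. z + t *\<^sub>R y) has_derivative (\<lambda>s. s *\<^sub>R y)) (at t)"
    by (auto intro!: derivative_eq_intros)
  from has_derivative_compose[OF this assms]
  have "((\<lambda>t. f (z + t *\<^sub>R y)) has_derivative (\<lambda>s. f' (s *\<^sub>R y))) (at t)" .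
  moreover have "(\<lambda>s. f' (s *\<^sub>R y)) = (*) (f' y)"
    using l by (auto simp: linear_scale)
  ultimately show ?thesis by (simp add: has_field_derivative_def)
qed

lemma deriv_right_le:
  fixes f :: "real \<Rightarrow> real"
  assumes "(f has_real_derivative D) (at 0)" "e > 0" "\<And>t. 0 < t \<Longrightarrow> t < e \<Longrightarrow> (f t - f 0) / t \<le> B"
  shows "D \<le> B"
proof -
  have "((\<lambda>y. (f y - f 0) / (y - 0)) \<longlongrightarrow> D) (at 0)" using assms(1) has_field_derivative_iff by blast
  hence "((\<lambda>y. (f y - f 0) / y) \<longlongrightarrow> D) (at_right 0)"
    by (simp add: tendsto_mono[OF at_le[of "{0<..}" UNIV]])
  moreover have "eventually (\<lambda>t. (f t - f 0) / t \<le> B) (at_right 0)"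
    using eventually_at_right_real[OF assms(2)] by eventually_elim (use assms(3) in auto)
  ultimately show ?thesis using tendsto_upperbound by force
qed

lemma deriv_right_ge:
  fixes f :: "real \<Rightarrow> real"
  assumes "(f has_real_derivative D) (at 0)" "e > 0" "\<And>t. 0 < t \<Longrightarrow> t < e \<Longrightarrow> (f t - f 0) / t \<ge> B"
  shows "D \<ge> B"
proof -
  have "((\<lambda>t. - f t) has_real_derivative - D) (at 0)" using assms(1) by (rule DERIV_minus)
  moreover have "\<And>t. 0 < t \<Longrightarrow> t < e \<Longrightarrow> (- f t - - f 0) / t \<le> - B"
    using assms(3) by (smt (verit) minus_divide_left)
  ultimately have "- D \<le> - B" by (rule deriv_right_le[OF _ assms(2)])
  thus ?thesis by simp
qed

locale nbar =
  fixes K :: "'a::euclidean_space set" and \<nu> :: real and F :: "'a \<Rightarrow> real"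
    and gF :: "'a \<Rightarrow> 'a" and HF :: "'a \<Rightarrow> 'a \<Rightarrow> 'a"
  assumes reg: "regular_cone K" and nb: "normal_barrier K \<nu> F gF HF"
begin

lemma coneK: "cone K" and convK: "convex K" and closedK: "closed K"
  and pointed: "K \<inter> uminus ` K = {0}" and intne: "interior K \<noteq> {}"
  using reg by (auto simp: regular_cone_def)

lemma dF: "z \<in> interior K \<Longrightarrow> (F has_derivative (\<lambda>h. gF z \<bullet> h)) (at z)"
  using nb by (auto simp: normal_barrier_def self_conc_barrier_def grad_hess_def)
lemma dg: "z \<in> interior K \<Longrightarrow> (gF has_derivative HF z) (at z)"
  using nb by (auto simp: normal_barrier_def self_conc_barrier_def grad_hess_def)
lemma linHF: "z \<in> interior K \<Longrightarrow> linear (HF z)"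
  using dg has_derivative_linear by blast
lemma sc: "z \<in> interior K \<Longrightarrow> \<exists>D3. ((\<lambda>y. HF y h \<bullet> h) has_derivative D3) (at z) \<and>
          \<bar>D3 h\<bar> \<le> 2 * (HF z h \<bullet> h) powr (3/2)"
  using nb by (auto simp: normal_barrier_def self_conc_barrier_def)
lemma front: "b \<in> frontier K \<Longrightarrow> filterlim F at_top (at b within interior K)"
  using nb by (auto simp: normal_barrier_def self_conc_barrier_def)
lemma hom: "z \<in> interior K \<Longrightarrow> \<tau> > 0 \<Longrightarrow> F (\<tau> *\<^sub>R z) = F z - \<nu> * ln \<tau>"
  using nb by (auto simp: normal_barrier_def)
lemma cvx: "convex_on (interior K) F"
  using nb by (auto simp: normal_barrier_def self_conc_barrier_def)

lemma line_int: "x \<in> interior K \<Longrightarrow> y \<in> K \<Longrightarrow> t \<ge> 0 \<Longrightarrow> x + t *\<^sub>R y \<in> interior K"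
  using int_add coneK convK mem_cone by blast

lemma dphi: "z + t *\<^sub>R y \<in> interior K \<Longrightarrow>
   ((\<lambda>t. F (z + t *\<^sub>R y)) has_real_derivative gF (z + t *\<^sub>R y) \<bullet> y) (at t)"
  using line_deriv[OF dF] by blast

lemma dphi1: "z + t *\<^sub>R y \<in> interior K \<Longrightarrow>
   ((\<lambda>t. gF (z + t *\<^sub>R y) \<bullet> y) has_real_derivative HF (z + t *\<^sub>R y) y \<bullet> y) (at t)"
proof -
  assume a: "z + t *\<^sub>R y \<in> interior K"
  have "((\<lambda>v. gF v \<bullet> y) has_derivative (\<lambda>h. HF (z + t *\<^sub>R y) h \<bullet> y)) (at (z + t *\<^sub>R y))"
    using dg[OF a] by (rule has_derivative_inner_left)
  thus ?thesis using line_deriv by fastforce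
qed

lemma dq: "z + t *\<^sub>R y \<in> interior K \<Longrightarrow>
   \<exists>D. ((\<lambda>t. HF (z + t *\<^sub>R y) y \<bullet> y) has_real_derivative D) (at t) \<and>
       \<bar>D\<bar> \<le> 2 * (HF (z + t *\<^sub>R y) y \<bullet> y) powr (3/2)"
proof -
  assume a: "z + t *\<^sub>R y \<in> interior K"
  obtain D3 where "((\<lambda>w. HF w y \<bullet> y) has_derivative D3) (at (z + t *\<^sub>R y))"
     "\<bar>D3 y\<bar> \<le> 2 * (HF (z + t *\<^sub>R y) y \<bullet> y) powr (3/2)" using sc[OF a] by blast
  thus ?thesis using line_deriv by fastforce
qed

end

context nbar begin

lemma tangent:
  assumes z: "z \<in> interior K" and w: "w \<in> interior K"
  shows "F z + gF z \<bullet> (w - z) \<le> F w"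
proof -
  have d: "((\<lambda>t. F (z + t *\<^sub>R (w - z))) has_real_derivative gF z \<bullet> (w - z)) (at 0)"
    using dphi[of z 0 "w - z"] z by simp
  have "gF z \<bullet> (w - z) \<le> F w - F z"
  proof (rule deriv_right_le[OF d zero_less_one])
    fix t :: real assume t: "0 < t" "t < 1"
    have "z + t *\<^sub>R (w - z) = (1 - t) *\<^sub>R z + t *\<^sub>R w" by (simp add: algebra_simps)
    hence "F (z + t *\<^sub>R (w - z)) \<le> (1 - t) * F z + t * F w"
      using convex_onD[OF cvx, of t z w] t z w by simp
    hence "F (z + t *\<^sub>R (w - z)) - F (z + 0 *\<^sub>R (w - z)) \<le> t * (F w - F z)"
      by (simp add: algebra_simps)
    thus "(F (z + t *\<^sub>R (w - z)) - F (z + 0 *\<^sub>R (w - z))) / t \<le> F w - F z"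
      using t by (simp add: divide_le_eq mult.commute)
  qed
  thus ?thesis by simp
qed

lemma psd:
  assumes z: "z \<in> interior K"
  shows "HF z h \<bullet> h \<ge> 0"
proof -
  obtain r where r: "r > 0" "ball z r \<subseteq> interior K"
    using z open_interior open_contains_ball by blast
  define e where "e = r / (norm h + 1)"
  have hp: "norm h + 1 > 0" by (smt (verit) norm_ge_zero)
  have e: "e > 0" unfolding e_def using r(1) hp by (rule divide_pos_pos)
  have ins: "z + t *\<^sub>R h \<in> interior K" if "0 \<le> t" "t < e" for t
  proof -
    have "norm (t *\<^sub>R h) = t * norm h" using that by simp
    also have "\<dots> \<le> t * (norm h + 1)" using that by (simp add: mult_left_mono)
    also have "\<dots> < e * (norm h + 1)" by (rule mult_strict_right_mono) (use that hp in auto)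
    also have "\<dots> = r" using hp by (simp add: e_def)
    finally show ?thesis using r by (auto simp: dist_norm)
  qed
  have d: "((\<lambda>t. gF (z + t *\<^sub>R h) \<bullet> h) has_real_derivative HF z h \<bullet> h) (at 0)"
    using dphi1[of z 0 h] z by simp
  show ?thesis
  proof (rule deriv_right_ge[OF d e])
    fix t :: real assume t: "0 < t" "t < e"
    let ?w = "z + t *\<^sub>R h"
    have w: "?w \<in> interior K" using ins t by simp
    have "F z + gF z \<bullet> (?w - z) \<le> F ?w" by (rule tangent[OF z w])
    moreover have "F ?w + gF ?w \<bullet> (z - ?w) \<le> F z" by (rule tangent[OF w z])
    ultimately have "t * (gF ?w \<bullet> h) - t * (gF z \<bullet> h) \<ge> 0"
      by (simp add: inner_diff_right inner_minus_right)
    hence "gF ?w \<bullet> h - gF z \<bullet> h \<ge> 0" using t by (simp add: right_diff_distrib[symmetric] zero_le_mult_iff)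
    hence "0 \<le> (gF ?w \<bullet> h - gF z \<bullet> h) / t" using t by simp
    thus "0 \<le> (gF (z + t *\<^sub>R h) \<bullet> h - gF (z + 0 *\<^sub>R h) \<bullet> h) / t" by simp
  qed
qed

lemma gF_self:
  assumes z: "z \<in> interior K"
  shows "gF z \<bullet> z = - \<nu>"
proof -
  have d1: "((\<lambda>t. F (0 + t *\<^sub>R z)) has_real_derivative gF (0 + 1 *\<^sub>R z) \<bullet> z) (at 1)"
    by (rule dphi) (use z in simp)
  have d2: "((\<lambda>t. F z - \<nu> * ln t) has_real_derivative - \<nu>) (at 1)"
    by (auto intro!: derivative_eq_intros)
  have "((\<lambda>t. F (0 + t *\<^sub>R z)) has_real_derivative - \<nu>) (at 1)"
    by (rule has_field_derivative_transform_within_open[OF d2, of "{0<..}"]) (use hom z in auto)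
  with d1 show ?thesis using DERIV_unique by fastforce
qed

lemma gF_nonpos:
  assumes z: "z \<in> interior K" and y: "y \<in> interior K"
  shows "gF z \<bullet> y \<le> 0"
proof (rule ccontr)
  assume "\<not> ?thesis"
  hence g: "gF z \<bullet> y > 0" by simp
  let ?g = "gF z \<bullet> y"
  have "continuous (at y) F" using dF[OF y] has_derivative_continuous by blast
  then obtain d where d: "d > 0" "\<And>w. dist w y < d \<Longrightarrow> dist (F w) (F y) < 1"
    unfolding continuous_at_eps_delta by (meson zero_less_one)
  define C where "C = F y + 1 - F z"
  define S where "S = max 1 (norm z / d + 1)"
  have bound: "s * ?g \<le> C + \<bar>\<nu>\<bar> * ln s" if s: "s \<ge> S" for s
  proof -
    have s1: "s \<ge> 1" using s by (simp add: S_def)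
    have s0: "s > 0" using s1 by simp
    have "norm z / d < s" using s by (simp add: S_def)
    hence nz: "norm z < s * d" using d by (simp add: divide_less_eq mult.commute)
    have "dist (y + (1/s) *\<^sub>R z) y = norm z / s" using s0 by (simp add: dist_norm)
    also have "\<dots> < d" using nz s0 by (simp add: divide_less_eq mult.commute)
    finally have "dist (y + (1/s) *\<^sub>R z) y < d" .
    hence "dist (F (y + (1/s) *\<^sub>R z)) (F y) < 1" by (rule d(2))
    hence F1: "F (y + (1/s) *\<^sub>R z) < F y + 1" by (simp add: dist_real_def abs_less_iff)
    have sz: "(1/s) *\<^sub>R z \<in> interior K" using int_scale[OF coneK z] s0 by simp
    have yz: "y + (1/s) *\<^sub>R z \<in> interior K"
      by (rule int_add[OF coneK convK y interior_subset[THEN subsetD, OF sz]])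
    have eq: "z + s *\<^sub>R y = s *\<^sub>R (y + (1/s) *\<^sub>R z)" using s0 by (simp add: algebra_simps)
    have zs: "z + s *\<^sub>R y \<in> interior K" using line_int[OF z interior_subset[THEN subsetD, OF y]] s0 by simp
    have "F z + gF z \<bullet> ((z + s *\<^sub>R y) - z) \<le> F (z + s *\<^sub>R y)" by (rule tangent[OF z zs])
    also have "\<dots> = F (y + (1/s) *\<^sub>R z) - \<nu> * ln s" unfolding eq by (rule hom[OF yz s0])
    finally have "F z + s * ?g \<le> F (y + (1/s) *\<^sub>R z) - \<nu> * ln s" by simp
    moreover have "- \<nu> * ln s \<le> \<bar>\<nu>\<bar> * ln s"
      by (rule mult_right_mono) (use s1 in auto)
    ultimately show ?thesis using F1 by (simp add: C_def)
  qed
  define w where "w = max (sqrt S) ((\<bar>C\<bar> + 2 * \<bar>\<nu>\<bar>) / ?g + 1)"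
  have "S \<ge> 1" by (simp add: S_def)
  hence "sqrt S \<ge> 1" by simp
  hence w1: "w \<ge> 1" unfolding w_def by linarith
  have sS: "sqrt S \<le> w" by (simp add: w_def)
  have S0: "S \<ge> 0" by (simp add: S_def)
  have "S = sqrt S * sqrt S" using S0 by simp
  also have "\<dots> \<le> w * w" using sS S0 w1 by (intro mult_mono) auto
  finally have wS: "w * w \<ge> S" .
  have "w > (\<bar>C\<bar> + 2 * \<bar>\<nu>\<bar>) / ?g" by (simp add: w_def)
  hence gw: "w * ?g > \<bar>C\<bar> + 2 * \<bar>\<nu>\<bar>" using g by (simp add: divide_less_eq)
  have "ln (w * w) = 2 * ln w" using w1 by (simp add: ln_mult)
  also have "\<dots> \<le> 2 * w" using w1 ln_le_minus_one[of w] by simp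
  finally have lnw: "ln (w * w) \<le> 2 * w" .
  have "(w * w) * ?g \<le> C + \<bar>\<nu>\<bar> * ln (w * w)" by (rule bound[OF wS])
  also have "\<dots> \<le> \<bar>C\<bar> + \<bar>\<nu>\<bar> * (2 * w)"
  proof -
    have "\<bar>\<nu>\<bar> * ln (w * w) \<le> \<bar>\<nu>\<bar> * (2 * w)" by (rule mult_left_mono[OF lnw abs_ge_zero])
    thus ?thesis by linarith
  qed
  also have "\<dots> \<le> w * (\<bar>C\<bar> + 2 * \<bar>\<nu>\<bar>)"
  proof -
    have "\<bar>C\<bar> * 1 \<le> \<bar>C\<bar> * w" by (rule mult_left_mono[OF w1 abs_ge_zero])
    moreover have "w * (\<bar>C\<bar> + 2 * \<bar>\<nu>\<bar>) = \<bar>C\<bar> * w + \<bar>\<nu>\<bar> * (2 * w)" by (simp add: algebra_simps)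
    ultimately show ?thesis by linarith
  qed
  also have "\<dots> < w * (w * ?g)" using gw w1 by (intro mult_strict_left_mono) auto
  finally show False by (simp add: mult.assoc)
qed

end

lemma powr32: "(a::real) \<ge> 0 \<Longrightarrow> a powr (3/2) = a * sqrt a"
proof -
  assume a: "a \<ge> 0"
  have "a powr (3/2) = a powr (1 + 1/2)" by simp
  also have "\<dots> = a powr 1 * a powr (1/2)" by (rule powr_add)
  also have "\<dots> = a * sqrt a" using a by (simp add: powr_half_sqrt)
  finally show ?thesis .
qed

lemma inv_sqrt_deriv:
  fixes q :: "real \<Rightarrow> real"
  assumes e: "\<epsilon> > 0" and q0: "q t \<ge> 0" and dq: "(q has_real_derivative D) (at t)"
    and bd: "\<bar>D\<bar> \<le> 2 * q t * sqrt (q t)"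
  shows "\<exists>E. ((\<lambda>s. inverse (sqrt (q s + \<epsilon>))) has_real_derivative E) (at t) \<and> \<bar>E\<bar> \<le> 1"
proof -
  define r where "r = sqrt (q t + \<epsilon>)"
  have rp: "r > 0" using e q0 by (simp add: r_def)
  have r2: "r * r = q t + \<epsilon>" using e q0 by (simp add: r_def)
  have d1: "((\<lambda>s. q s + \<epsilon>) has_real_derivative D + 0) (at t)"
    by (rule DERIV_add[OF dq DERIV_const])
  have d2: "((\<lambda>s. sqrt (q s + \<epsilon>)) has_real_derivative inverse (sqrt (q t + \<epsilon>)) / 2 * (D + 0)) (at t)"
    by (rule DERIV_chain2[OF DERIV_real_sqrt d1]) (use e q0 in simp)
  have d3: "((\<lambda>s. inverse (sqrt (q s + \<epsilon>))) has_real_derivative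
       - (inverse (sqrt (q t + \<epsilon>)) / 2 * (D + 0) * inverse ((sqrt (q t + \<epsilon>))\<^sup>2))) (at t)"
    using DERIV_inverse_fun[OF d2] e q0 by (simp add: numeral_2_eq_2)
  have sq: "sqrt (q t) \<le> r" unfolding r_def using e by simp
  have "\<bar>D\<bar> \<le> 2 * (r * r) * r"
  proof -
    have "2 * q t * sqrt (q t) \<le> 2 * (r * r) * r"
      using r2 e q0 sq by (intro mult_mono) auto
    thus ?thesis using bd by linarith
  qed
  hence "\<bar>- (inverse r / 2 * D * inverse (r\<^sup>2))\<bar> \<le> 1"
    using rp by (simp add: abs_mult power2_eq_square field_simps)
  thus ?thesis using d3 unfolding r_def[symmetric] by auto
qed

lemma inv_sqrt_lip:
  fixes q :: "real \<Rightarrow> real"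
  assumes e: "\<epsilon> > 0" and ab: "a \<le> b"
    and hyp: "\<And>t. a \<le> t \<Longrightarrow> t \<le> b \<Longrightarrow> q t \<ge> 0 \<and>
           (\<exists>D. (q has_real_derivative D) (at t) \<and> \<bar>D\<bar> \<le> 2 * q t * sqrt (q t))"
  shows "inverse (sqrt (q b + \<epsilon>)) \<le> inverse (sqrt (q a + \<epsilon>)) + (b - a)"
    and "inverse (sqrt (q a + \<epsilon>)) \<le> inverse (sqrt (q b + \<epsilon>)) + (b - a)"
proof -
  let ?f = "\<lambda>s. inverse (sqrt (q s + \<epsilon>))"
  have de: "\<exists>E. (?f has_real_derivative E) (at t) \<and> \<bar>E\<bar> \<le> 1" if "a \<le> t" "t \<le> b" for t
    using hyp[OF that] inv_sqrt_deriv[OF e] by blast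
  have "(\<lambda>s. s - ?f s) a \<le> (\<lambda>s. s - ?f s) b"
  proof (rule DERIV_nonneg_imp_nondecreasing[OF ab])
    fix t assume "a \<le> t" "t \<le> b"
    then obtain E where "(?f has_real_derivative E) (at t)" "\<bar>E\<bar> \<le> 1" using de by blast
    thus "\<exists>y. ((\<lambda>s. s - ?f s) has_real_derivative y) (at t) \<and> 0 \<le> y"
      by (intro exI[of _ "1 - E"]) (auto intro!: DERIV_diff DERIV_ident)
  qed
  thus "?f b \<le> ?f a + (b - a)" by simp
  have "(\<lambda>s. s + ?f s) a \<le> (\<lambda>s. s + ?f s) b"
  proof (rule DERIV_nonneg_imp_nondecreasing[OF ab])
    fix t assume "a \<le> t" "t \<le> b"
    then obtain E where "(?f has_real_derivative E) (at t)" "\<bar>E\<bar> \<le> 1" using de by blast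
    thus "\<exists>y. ((\<lambda>s. s + ?f s) has_real_derivative y) (at t) \<and> 0 \<le> y"
      by (intro exI[of _ "1 + E"]) (auto intro!: DERIV_add DERIV_ident)
  qed
  thus "?f a \<le> ?f b + (b - a)" by simp
qed

context nbar begin

lemma line_facts:
  assumes "x + t *\<^sub>R y \<in> interior K"
  shows "HF (x + t *\<^sub>R y) y \<bullet> y \<ge> 0 \<and>
     (\<exists>D. ((\<lambda>t. HF (x + t *\<^sub>R y) y \<bullet> y) has_real_derivative D) (at t) \<and>
        \<bar>D\<bar> \<le> 2 * (HF (x + t *\<^sub>R y) y \<bullet> y) * sqrt (HF (x + t *\<^sub>R y) y \<bullet> y))"
  using psd[OF assms] dq[OF assms] powr32[OF psd[OF assms]] by (simp add: mult.assoc)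

lemma KL_core:
  assumes x: "x \<in> interior K" and y: "y \<in> interior K"
  shows "sqrt (HF x y \<bullet> y) + gF x \<bullet> y \<le> 0"
proof (rule ccontr)
  define A where "A = sqrt (HF x y \<bullet> y) + gF x \<bullet> y"
  assume "\<not> ?thesis"
  hence A: "A > 0" by (simp add: A_def)
  define t where "t = 4 / A"
  define \<epsilon> where "\<epsilon> = A\<^sup>2 / 16"
  have t: "t > 0" and e: "\<epsilon> > 0" using A by (auto simp: t_def \<epsilon>_def)
  define q where "q s = HF (x + s *\<^sub>R y) y \<bullet> y" for s
  define \<phi> where "\<phi> s = gF (x + s *\<^sub>R y) \<bullet> y" for s
  have pin: "s \<ge> 0 \<Longrightarrow> x + s *\<^sub>R y \<in> interior K" for s
    using line_int[OF x] y interior_subset by blast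
  have lf: "s \<ge> 0 \<Longrightarrow> q s \<ge> 0 \<and> (\<exists>D. (q has_real_derivative D) (at s) \<and> \<bar>D\<bar> \<le> 2 * q s * sqrt (q s))" for s
    using line_facts[OF pin] unfolding q_def by blast
  define c where "c = inverse (sqrt (q 0 + \<epsilon>))"
  have q00: "q 0 \<ge> 0" using lf by simp
  have c: "c > 0" using q00 e by (simp add: c_def)
  have low: "q s - inverse ((c + s)\<^sup>2) + \<epsilon> \<ge> 0" if s: "0 \<le> s" for s
  proof -
    have "inverse (sqrt (q s + \<epsilon>)) \<le> c + s"
      using inv_sqrt_lip(1)[OF e s, of q] lf unfolding c_def by auto
    moreover have "sqrt (q s + \<epsilon>) > 0" using lf[OF s] e by simp
    ultimately have "inverse (c + s) \<le> sqrt (q s + \<epsilon>)"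
      using c s by (metis inverse_inverse_eq le_imp_inverse_le positive_imp_inverse_positive)
    hence "(inverse (c + s))\<^sup>2 \<le> (sqrt (q s + \<epsilon>))\<^sup>2"
      using c s by (intro power_mono) auto
    thus ?thesis using lf[OF s] e by (simp add: power_inverse)
  qed
  have dphi: "s \<ge> 0 \<Longrightarrow> (\<phi> has_real_derivative q s) (at s)" for s
    using dphi1[OF pin] unfolding \<phi>_def q_def by blast
  let ?g = "\<lambda>s. \<phi> s + inverse (c + s) + \<epsilon> * s"
  have "?g 0 \<le> ?g t"
  proof (rule DERIV_nonneg_imp_nondecreasing[of 0 t ?g])
    show "0 \<le> t" using t by simp
    fix s assume s: "0 \<le> s" "s \<le> t"
    have a: "((\<lambda>s. c + s) has_real_derivative 0 + 1) (at s)"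
      by (rule DERIV_add[OF DERIV_const DERIV_ident])
    have b: "((\<lambda>s. inverse (c + s)) has_real_derivative - ((0 + 1) * inverse ((c + s) ^ Suc (Suc 0)))) (at s)"
      by (rule DERIV_inverse_fun[OF a]) (use c s in simp)
    have cc: "((\<lambda>s. \<epsilon> * s) has_real_derivative \<epsilon> * 1) (at s)" by (rule DERIV_cmult[OF DERIV_ident])
    have "(?g has_real_derivative q s + - ((0 + 1) * inverse ((c + s) ^ Suc (Suc 0))) + \<epsilon> * 1) (at s)"
      by (rule DERIV_add[OF DERIV_add[OF dphi[OF s(1)] b] cc])
    moreover have "q s + - ((0 + 1) * inverse ((c + s) ^ Suc (Suc 0))) + \<epsilon> * 1 \<ge> 0"
      using low[OF s(1)] by (simp add: numeral_2_eq_2)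
    ultimately show "\<exists>y. (?g has_real_derivative y) (at s) \<and> 0 \<le> y" by blast
  qed
  moreover have "\<phi> t \<le> 0" unfolding \<phi>_def using gF_nonpos[OF pin y] t by simp
  moreover have "inverse (c + t) \<le> inverse t" using c t by (simp add: le_imp_inverse_le)
  moreover have "inverse c \<ge> sqrt (q 0)" using e q00 by (simp add: c_def)
  ultimately have "A \<le> inverse t + \<epsilon> * t"
    unfolding A_def \<phi>_def q_def by simp
  also have "\<dots> = A / 2" using A by (simp add: t_def \<epsilon>_def power2_eq_square field_simps)
  finally show False using A by simp
qed

end

context nbar begin

lemma KL_K:
  assumes x: "x \<in> interior K" and y: "y \<in> K"
  shows "sqrt (HF x y \<bullet> y) + gF x \<bullet> y \<le> 0"
proof -
  have bl: "bounded_linear (HF x)" using linHF[OF x] linear_conv_bounded_linear by blast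
  have ins: "y + e *\<^sub>R x \<in> interior K" if "e > 0" for e
    using int_add[OF coneK convK int_scale[OF coneK x that] y] by (simp add: add.commute)
  have t1: "((\<lambda>e. y + e *\<^sub>R x) \<longlongrightarrow> y) (at_right 0)"
  proof -
    have "((\<lambda>e. y + e *\<^sub>R x) \<longlongrightarrow> y + 0 *\<^sub>R x) (at_right 0)" by (intro tendsto_intros)
    thus ?thesis by simp
  qed
  have t2: "((\<lambda>e. HF x (y + e *\<^sub>R x)) \<longlongrightarrow> HF x y) (at_right 0)"
    by (rule bounded_linear.tendsto[OF bl t1])
  have lim: "((\<lambda>e. sqrt (HF x (y + e *\<^sub>R x) \<bullet> (y + e *\<^sub>R x)) + gF x \<bullet> (y + e *\<^sub>R x))
       \<longlongrightarrow> sqrt (HF x y \<bullet> y) + gF x \<bullet> y) (at_right 0)"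
    by (intro tendsto_intros t1 t2)
  have ev: "eventually (\<lambda>e. sqrt (HF x (y + e *\<^sub>R x) \<bullet> (y + e *\<^sub>R x)) + gF x \<bullet> (y + e *\<^sub>R x) \<le> 0) (at_right 0)"
    using eventually_at_right_real[OF zero_less_one]
    by eventually_elim (use KL_core[OF x ins] in auto)
  show ?thesis by (rule tendsto_upperbound[OF lim ev]) simp
qed

lemma KL_sq:
  assumes x: "x \<in> interior K" and y: "y \<in> K"
  shows "HF x y \<bullet> y \<le> (gF x \<bullet> y)\<^sup>2" and "gF x \<bullet> y \<le> 0"
proof -
  have k: "sqrt (HF x y \<bullet> y) \<le> - (gF x \<bullet> y)" using KL_K[OF x y] by simp
  have q: "HF x y \<bullet> y \<ge> 0" by (rule psd[OF x])
  show "gF x \<bullet> y \<le> 0" using k real_sqrt_ge_zero[OF q] by linarith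
  have "(sqrt (HF x y \<bullet> y))\<^sup>2 \<le> (- (gF x \<bullet> y))\<^sup>2"
    using k q by (intro power_mono) auto
  thus "HF x y \<bullet> y \<le> (gF x \<bullet> y)\<^sup>2" using q by simp
qed

lemma S_lemma:
  assumes x: "x \<in> interior K" and ux: "gF x \<bullet> (u - x) \<ge> 0"
    and up: "u + h \<in> K" and um: "u - h \<in> K"
  shows "HF x h \<bullet> h \<le> 2 * \<nu>\<^sup>2"
proof -
  have lin: "linear (HF x)" by (rule linHF[OF x])
  define g1 where "g1 = - (gF x \<bullet> (u + h))"
  define g2 where "g2 = - (gF x \<bullet> (u - h))"
  have Q1: "HF x (u + h) \<bullet> (u + h) \<le> g1\<^sup>2" and g1: "g1 \<ge> 0"
    using KL_sq[OF x up] by (auto simp: g1_def)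
  have Q2: "HF x (u - h) \<bullet> (u - h) \<le> g2\<^sup>2" and g2: "g2 \<ge> 0"
    using KL_sq[OF x um] by (auto simp: g2_def)
  have par: "HF x (u + h) \<bullet> (u + h) + HF x (u - h) \<bullet> (u - h) = 2 * (HF x u \<bullet> u) + 2 * (HF x h \<bullet> h)"
    using lin by (simp add: linear_add linear_diff inner_add_left inner_add_right inner_diff_left inner_diff_right)
  have Qu: "HF x u \<bullet> u \<ge> 0" by (rule psd[OF x])
  have "gF x \<bullet> u \<ge> gF x \<bullet> x" using ux by (simp add: inner_diff_right)
  hence gu: "gF x \<bullet> u \<ge> - \<nu>" using gF_self[OF x] by simp
  have sum: "g1 + g2 = - 2 * (gF x \<bullet> u)" by (simp add: g1_def g2_def inner_add_right inner_diff_right)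
  have s2: "g1 + g2 \<le> 2 * \<nu>" using sum gu by simp
  have "g1\<^sup>2 + g2\<^sup>2 \<le> (g1 + g2)\<^sup>2" using g1 g2 by (simp add: power2_eq_square algebra_simps)
  also have "\<dots> \<le> (2 * \<nu>)\<^sup>2" using s2 g1 g2 by (intro power_mono) auto
  finally have "g1\<^sup>2 + g2\<^sup>2 \<le> 4 * \<nu>\<^sup>2" by (simp add: power2_eq_square)
  thus ?thesis using Q1 Q2 par Qu by linarith
qed

end

lemma quad_scale: "linear f \<Longrightarrow> f (c *\<^sub>R h) \<bullet> (c *\<^sub>R h) = c\<^sup>2 * (f h \<bullet> h)"
  by (simp add: linear_scale power2_eq_square)

lemma inv_sqrt_sq: "(s::real) > 0 \<Longrightarrow> (inverse (sqrt s))\<^sup>2 = inverse s"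
  by (simp add: power_inverse)

context nbar begin

lemma dikin:
  assumes u: "u \<in> interior K" and v: "HF u v \<bullet> v < 1"
  shows "u + v \<in> interior K"
proof (rule ccontr)
  assume nin: "u + v \<notin> interior K"
  define p where "p s = u + s *\<^sub>R v" for s
  define B where "B = {0..1} \<inter> p -` (- interior K)"
  have 1: "1 \<in> B" using nin by (simp add: B_def p_def)
  have contp: "continuous (at s) p" for s unfolding p_def by (intro continuous_intros)
  have cl: "closed B" unfolding B_def
    by (intro closed_Int closed_atLeastAtMost continuous_closed_vimage contp) (simp add: closed_Compl)
  have bb: "bdd_below B" by (rule bdd_belowI[of _ 0]) (auto simp: B_def)
  define T where "T = Inf B"
  have TB: "T \<in> B" unfolding T_def using closed_contains_Inf[OF _ bb cl] 1 by blast
  have T01: "0 \<le> T" "T \<le> 1" and pT: "p T \<notin> interior K" using TB by (auto simp: B_def)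
  have below: "p s \<in> interior K" if "0 \<le> s" "s < T" for s
  proof (rule ccontr)
    assume "p s \<notin> interior K"
    hence "s \<in> B" using that T01 by (auto simp: B_def)
    hence "T \<le> s" unfolding T_def using bb by (rule cInf_lower)
    thus False using that by simp
  qed
  have T0: "T > 0" using pT u T01 by (cases "T = 0") (auto simp: p_def)
  have v0: "v \<noteq> 0" using pT u by (auto simp: p_def)
  define q where "q s = HF (p s) v \<bullet> v" for s
  have lf: "q s \<ge> 0 \<and> (\<exists>D. (q has_real_derivative D) (at s) \<and> \<bar>D\<bar> \<le> 2 * q s * sqrt (q s))"
    if "0 \<le> s" "s < T" for s
    using line_facts[of u s v] below[OF that] unfolding q_def p_def by blast
  have q0: "q 0 \<ge> 0" "q 0 < 1" using lf[OF order_refl T0] v by (auto simp: q_def p_def)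
  define \<epsilon> where "\<epsilon> = (1 - q 0) / 2"
  have e: "\<epsilon> > 0" using q0 by (simp add: \<epsilon>_def)
  define c where "c = inverse (sqrt (q 0 + \<epsilon>))"
  have "q 0 + \<epsilon> < 1" using q0(2) by (simp add: \<epsilon>_def field_simps)
  moreover have "q 0 + \<epsilon> > 0" using q0(1) e by linarith
  ultimately have "sqrt (q 0 + \<epsilon>) < 1" "sqrt (q 0 + \<epsilon>) > 0" by auto
  hence c1: "c > 1" unfolding c_def by (simp add: one_less_inverse)
  define \<delta> where "\<delta> = c - 1"
  have d: "\<delta> > 0" using c1 by (simp add: \<delta>_def)
  define M where "M = (inverse \<delta>)\<^sup>2"
  have M0: "M \<ge> 0" by (simp add: M_def)
  have qM: "q s \<le> M" if s: "0 \<le> s" "s < T" for s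
  proof -
    have hyp: "q t \<ge> 0 \<and> (\<exists>D. (q has_real_derivative D) (at t) \<and> \<bar>D\<bar> \<le> 2 * q t * sqrt (q t))"
      if "0 \<le> t" "t \<le> s" for t using that s by (intro lf) auto
    have "c \<le> inverse (sqrt (q s + \<epsilon>)) + (s - 0)"
      unfolding c_def by (rule inv_sqrt_lip(2)[OF e s(1) hyp])
    hence "c \<le> inverse (sqrt (q s + \<epsilon>)) + s" by simp
    hence "\<delta> \<le> inverse (sqrt (q s + \<epsilon>))" using s T01 by (simp add: \<delta>_def)
    moreover have pos: "sqrt (q s + \<epsilon>) > 0" using lf[OF s] e by simp
    ultimately have "sqrt (q s + \<epsilon>) \<le> inverse \<delta>"
      using d by (metis inverse_inverse_eq le_imp_inverse_le)
    hence "(sqrt (q s + \<epsilon>))\<^sup>2 \<le> (inverse \<delta>)\<^sup>2" using pos by (intro power_mono) auto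
    thus ?thesis using lf[OF s] e by (simp add: M_def)
  qed
  define \<phi>1 where "\<phi>1 s = gF (p s) \<bullet> v" for s
  define \<phi> where "\<phi> s = F (p s)" for s
  have d1: "(\<phi>1 has_real_derivative q s) (at s)" if "0 \<le> s" "s < T" for s
    using dphi1[of u s v] below[OF that] unfolding \<phi>1_def q_def p_def by blast
  have d0: "(\<phi> has_real_derivative \<phi>1 s) (at s)" if "0 \<le> s" "s < T" for s
    using dphi[of u s v] below[OF that] unfolding \<phi>1_def \<phi>_def p_def by blast
  define L where "L = \<bar>\<phi>1 0\<bar> + M"
  have phi1b: "\<phi>1 s \<le> L" if s: "0 \<le> s" "s < T" for s
  proof -
    have "(\<lambda>s. M * s - \<phi>1 s) 0 \<le> (\<lambda>s. M * s - \<phi>1 s) s"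
    proof (rule DERIV_nonneg_imp_nondecreasing[OF s(1)])
      fix t assume t: "0 \<le> t" "t \<le> s"
      hence t': "0 \<le> t" "t < T" using s by auto
      have "((\<lambda>s. M * s - \<phi>1 s) has_real_derivative M * 1 - q t) (at t)"
        by (intro DERIV_diff DERIV_cmult DERIV_ident d1[OF t'])
      thus "\<exists>y. ((\<lambda>s. M * s - \<phi>1 s) has_real_derivative y) (at t) \<and> 0 \<le> y"
        using qM[OF t'] by auto
    qed
    hence "\<phi>1 s \<le> \<phi>1 0 + M * s" by simp
    also have "\<dots> \<le> \<bar>\<phi>1 0\<bar> + M * 1" using s T01 M0 by (intro add_mono mult_left_mono) auto
    finally show ?thesis by (simp add: L_def)
  qed
  define Bd where "Bd = \<phi> 0 + \<bar>L\<bar>"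
  have phib: "\<phi> s \<le> Bd" if s: "0 \<le> s" "s < T" for s
  proof -
    have "(\<lambda>s. L * s - \<phi> s) 0 \<le> (\<lambda>s. L * s - \<phi> s) s"
    proof (rule DERIV_nonneg_imp_nondecreasing[OF s(1)])
      fix t assume t: "0 \<le> t" "t \<le> s"
      hence t': "0 \<le> t" "t < T" using s by auto
      have "((\<lambda>s. L * s - \<phi> s) has_real_derivative L * 1 - \<phi>1 t) (at t)"
        by (intro DERIV_diff DERIV_cmult DERIV_ident d0[OF t'])
      thus "\<exists>y. ((\<lambda>s. L * s - \<phi> s) has_real_derivative y) (at t) \<and> 0 \<le> y"
        using phi1b[OF t'] by auto
    qed
    hence "\<phi> s \<le> \<phi> 0 + L * s" by simp
    also have "L * s \<le> \<bar>L\<bar> * 1"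
    proof -
      have "L * s \<le> \<bar>L\<bar> * s" by (rule mult_right_mono) (use s in auto)
      also have "\<dots> \<le> \<bar>L\<bar> * 1" by (rule mult_left_mono) (use s T01 in auto)
      finally show ?thesis .
    qed
    finally show ?thesis by (simp add: Bd_def)
  qed
  have evl: "eventually (\<lambda>s. s \<in> {0<..<T}) (at_left T)" by (rule eventually_at_left_real[OF T0])
  have tp: "(p \<longlongrightarrow> p T) (at_left T)"
    unfolding p_def by (intro tendsto_intros)
  have pTK: "p T \<in> K"
  proof (rule Lim_in_closed_set[OF closedK _ _ tp])
    show "eventually (\<lambda>s. p s \<in> K) (at_left T)"
      using evl
    proof eventually_elim
      case (elim s)
      hence "p s \<in> interior K" using below by simp
      thus ?case using interior_subset by blast
    qed
  qed simp
  have fr: "p T \<in> frontier K" using pTK pT closedK by (simp add: frontier_def closure_closed)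
  have lim: "filterlim p (at (p T) within interior K) (at_left T)"
    unfolding filterlim_at
  proof
    show "eventually (\<lambda>s. p s \<in> interior K \<and> p s \<noteq> p T) (at_left T)"
      using evl
    proof eventually_elim
      case (elim s)
      hence "p s \<in> interior K" using below by auto
      moreover have "p s \<noteq> p T" using elim v0 by (auto simp: p_def)
      ultimately show ?case by simp
    qed
  qed (rule tp)
  have "filterlim (\<lambda>s. F (p s)) at_top (at_left T)"
    by (rule filterlim_compose[OF front[OF fr] lim])
  hence "eventually (\<lambda>s. Bd < F (p s)) (at_left T)" by (simp add: filterlim_at_top_dense)
  moreover have "eventually (\<lambda>s. F (p s) \<le> Bd) (at_left T)"
    using evl by eventually_elim (use phib in \<open>auto simp: \<phi>_def\<close>)
  ultimately have "eventually (\<lambda>s. False) (at_left T)" by eventually_elim simp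
  thus False by (simp add: eventually_False)
qed

lemma nu_ne0: "\<nu> \<noteq> 0"
proof
  assume n0: "\<nu> = 0"
  obtain x where x: "x \<in> interior K" using intne by blast
  have n0i: "0 \<notin> interior K"
  proof
    assume "0 \<in> interior K"
    then obtain e where e: "e > 0" "ball 0 e \<subseteq> K" using mem_interior by blast
    obtain b :: 'a where b: "b \<in> Basis" using nonempty_Basis by blast
    define w where "w = (e / 2) *\<^sub>R b"
    have nw: "norm w = e / 2" using b e by (simp add: w_def)
    have "w \<in> K" "- w \<in> K" using e nw by (auto intro!: e(2)[THEN subsetD])
    hence "w \<in> K \<inter> uminus ` K" by (auto intro: image_eqI[of w uminus "- w"])
    hence "w = 0" using pointed by blast
    thus False using nw e by simp
  qed
  have "0 \<in> K" using cone_contains_0[OF coneK] x interior_subset by blast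
  hence fr: "0 \<in> frontier K" using n0i closedK by (simp add: frontier_def closure_closed)
  have x0: "x \<noteq> 0" using x n0i by blast
  have evr: "eventually (\<lambda>s. s \<in> {0<..<1}) (at_right (0::real))"
    by (rule eventually_at_right_real) simp
  have tp: "((\<lambda>s. s *\<^sub>R x) \<longlongrightarrow> 0) (at_right 0)"
  proof -
    have "((\<lambda>s. s *\<^sub>R x) \<longlongrightarrow> 0 *\<^sub>R x) (at_right 0)" by (intro tendsto_intros)
    thus ?thesis by simp
  qed
  have lim: "filterlim (\<lambda>s. s *\<^sub>R x) (at 0 within interior K) (at_right 0)"
    unfolding filterlim_at
  proof
    show "eventually (\<lambda>s. s *\<^sub>R x \<in> interior K \<and> s *\<^sub>R x \<noteq> 0) (at_right 0)"
      using evr by eventually_elim (use int_scale[OF coneK x] x0 in auto)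
  qed (rule tp)
  have "filterlim (\<lambda>s. F (s *\<^sub>R x)) at_top (at_right 0)"
    by (rule filterlim_compose[OF front[OF fr] lim])
  hence "eventually (\<lambda>s. F x < F (s *\<^sub>R x)) (at_right 0)" by (simp add: filterlim_at_top_dense)
  moreover have "eventually (\<lambda>s. F (s *\<^sub>R x) = F x) (at_right 0)"
    using evr by eventually_elim (use hom[OF x] n0 in auto)
  ultimately have "eventually (\<lambda>s. False) (at_right (0::real))" by eventually_elim simp
  thus False by (simp add: eventually_False)
qed

lemma claim1:
  assumes H: "pos_def_op H" and E: "ellipsoid H u \<subseteq> K" and x: "x \<in> interior K"
    and g: "gF x \<bullet> (u - x) \<ge> 0"
  shows "loewner_le (\<lambda>h. (1 / (4 * \<nu>\<^sup>2)) *\<^sub>R HF x h) H"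
  unfolding loewner_le_def
proof
  fix h
  have linH: "linear H" and pd: "\<And>h. h \<noteq> 0 \<Longrightarrow> H h \<bullet> h > 0"
    using H by (auto simp: pos_def_op_def self_adjoint_def)
  have lin: "linear (HF x)" by (rule linHF[OF x])
  show "((1 / (4 * \<nu>\<^sup>2)) *\<^sub>R HF x h) \<bullet> h \<le> H h \<bullet> h"
  proof (cases "h = 0")
    case True thus ?thesis using linH lin by (simp add: linear_0)
  next
    case False
    define s where "s = H h \<bullet> h"
    have s: "s > 0" using pd[OF False] by (simp add: s_def)
    define h' where "h' = inverse (sqrt s) *\<^sub>R h"
    have Hh: "H h' \<bullet> h' = 1" using s unfolding h'_def quad_scale[OF linH] inv_sqrt_sq[OF s]
      by (simp add: s_def)
    have "u + h' \<in> ellipsoid H u" using Hh by (simp add: ellipsoid_def)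
    hence up: "u + h' \<in> K" using E by blast
    have "u - h' \<in> ellipsoid H u" using Hh linH by (simp add: ellipsoid_def linear_neg)
    hence um: "u - h' \<in> K" using E by blast
    have "HF x h' \<bullet> h' \<le> 2 * \<nu>\<^sup>2" by (rule S_lemma[OF x g up um])
    moreover have "HF x h' \<bullet> h' = (HF x h \<bullet> h) / s"
      unfolding h'_def quad_scale[OF lin] inv_sqrt_sq[OF s] by (simp add: divide_inverse mult.commute)
    ultimately have Q: "HF x h \<bullet> h \<le> 2 * \<nu>\<^sup>2 * s" using s by (simp add: divide_le_eq)
    show ?thesis
    proof (cases "\<nu> = 0")
      case True thus ?thesis using s by (simp add: s_def)
    next
      case False
      have "(1 / (4 * \<nu>\<^sup>2)) * (HF x h \<bullet> h) \<le> (1 / (4 * \<nu>\<^sup>2)) * (2 * \<nu>\<^sup>2 * s)"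
        using Q by (intro mult_left_mono) auto
      also have "\<dots> = s / 2" using False by (simp add: field_simps)
      finally show ?thesis using s by (simp add: s_def)
    qed
  qed
qed

lemma claim2:
  assumes x: "x \<in> interior K" and u: "u \<in> interior K" and g: "gF x \<bullet> (u - x) \<ge> 0"
  shows "loewner_le (\<lambda>h. (1 / (4 * \<nu>\<^sup>2)) *\<^sub>R HF x h) (HF u)"
  unfolding loewner_le_def
proof
  fix h
  have linu: "linear (HF u)" by (rule linHF[OF u])
  have lin: "linear (HF x)" by (rule linHF[OF x])
  have Qu: "HF u h \<bullet> h \<ge> 0" by (rule psd[OF u])
  have pm: "u + k \<in> K" "u - k \<in> K" if "HF u k \<bullet> k < 1" for k
  proof -
    show "u + k \<in> K" using dikin[OF u that] interior_subset by blast
    have "HF u (- k) \<bullet> (- k) < 1" using that linu by (simp add: linear_neg)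
    hence "u + - k \<in> interior K" by (rule dikin[OF u])
    hence "u - k \<in> interior K" by simp
    thus "u - k \<in> K" using interior_subset by blast
  qed
  show "((1 / (4 * \<nu>\<^sup>2)) *\<^sub>R HF x h) \<bullet> h \<le> HF u h \<bullet> h"
  proof (cases "HF u h \<bullet> h = 0")
    case True
    have "HF x h \<bullet> h \<le> 0"
    proof (rule ccontr)
      assume "\<not> ?thesis"
      hence qx: "HF x h \<bullet> h > 0" by simp
      define t where "t = sqrt ((2 * \<nu>\<^sup>2 + 1) / (HF x h \<bullet> h))"
      have z: "HF u (t *\<^sub>R h) \<bullet> (t *\<^sub>R h) < 1" unfolding quad_scale[OF linu] using True by simp
      have "HF x (t *\<^sub>R h) \<bullet> (t *\<^sub>R h) \<le> 2 * \<nu>\<^sup>2" by (rule S_lemma[OF x g pm(1)[OF z] pm(2)[OF z]])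
      moreover have "HF x (t *\<^sub>R h) \<bullet> (t *\<^sub>R h) = t\<^sup>2 * (HF x h \<bullet> h)"
        by (rule quad_scale[OF lin])
      moreover have "t\<^sup>2 = (2 * \<nu>\<^sup>2 + 1) / (HF x h \<bullet> h)" using qx by (simp add: t_def)
      ultimately show False using qx by simp
    qed
    thus ?thesis using True by (simp add: divide_nonpos_nonneg)
  next
    case False
    hence s: "HF u h \<bullet> h > 0" using Qu by simp
    define s where "s = HF u h \<bullet> h"
    define h' where "h' = inverse (sqrt (2 * s)) *\<^sub>R h"
    have s2: "2 * s > 0" using s by (simp add: s_def)
    have "HF u h' \<bullet> h' = 1 / 2" unfolding h'_def quad_scale[OF linu] inv_sqrt_sq[OF s2]
      using s by (simp add: s_def)
    hence z: "HF u h' \<bullet> h' < 1" by simp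
    have "HF x h' \<bullet> h' \<le> 2 * \<nu>\<^sup>2" by (rule S_lemma[OF x g pm(1)[OF z] pm(2)[OF z]])
    moreover have "HF x h' \<bullet> h' = (HF x h \<bullet> h) / (2 * s)"
      unfolding h'_def quad_scale[OF lin] inv_sqrt_sq[OF s2] by (metis divide_inverse mult.commute)
    ultimately have Q: "HF x h \<bullet> h \<le> 4 * \<nu>\<^sup>2 * s" using s by (simp add: divide_le_eq s_def)
    show ?thesis
    proof (cases "\<nu> = 0")
      case True thus ?thesis using s by simp
    next
      case False
      have "(1 / (4 * \<nu>\<^sup>2)) * (HF x h \<bullet> h) \<le> (1 / (4 * \<nu>\<^sup>2)) * (4 * \<nu>\<^sup>2 * s)"
        using Q by (intro mult_left_mono) auto
      also have "\<dots> = s" using False by (simp add: field_simps)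
      finally show ?thesis by (simp add: s_def)
    qed
  qed
qed

lemma claim3:
  assumes x: "x \<in> interior K" and u: "u \<in> K"
  shows "loewner_le (HF (x + u)) (\<lambda>h. (4 * \<nu>\<^sup>2) *\<^sub>R HF x h)"
  unfolding loewner_le_def
proof
  fix h
  have z: "x + u \<in> interior K" by (rule int_add[OF coneK convK x u])
  have "gF (x + u) \<bullet> u \<le> 0" by (rule KL_sq(2)[OF z u])
  hence g: "gF (x + u) \<bullet> (x - (x + u)) \<ge> 0" by (simp add: inner_diff_right inner_add_right)
  have "(1 / (4 * \<nu>\<^sup>2)) * (HF (x + u) h \<bullet> h) \<le> HF x h \<bullet> h"
    using claim2[OF z x g] by (simp add: loewner_le_def)
  hence "HF (x + u) h \<bullet> h \<le> (4 * \<nu>\<^sup>2) * (HF x h \<bullet> h)"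
    using nu_ne0 by (simp add: field_simps)
  thus "HF (x + u) h \<bullet> h \<le> ((4 * \<nu>\<^sup>2) *\<^sub>R HF x h) \<bullet> h" by simp
qed

end

theorem mainTheorem1:
  fixes K :: "'a::euclidean_space set" and \<nu> :: real
    and F :: "'a \<Rightarrow> real" and gF :: "'a \<Rightarrow> 'a" and HF :: "'a \<Rightarrow> 'a \<Rightarrow> 'a"
  assumes "regular_cone K"
    and "normal_barrier K \<nu> F gF HF"
  shows "(\<forall>H u x. pos_def_op H \<longrightarrow> ellipsoid H u \<subseteq> K \<longrightarrow> x \<in> interior K \<longrightarrow>
            gF x \<bullet> (u - x) \<ge> 0 \<longrightarrow>
            loewner_le (\<lambda>h. (1 / (4 * \<nu>\<^sup>2)) *\<^sub>R HF x h) H)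
       \<and> (\<forall>u x. x \<in> interior K \<longrightarrow> u \<in> interior K \<longrightarrow> gF x \<bullet> (u - x) \<ge> 0 \<longrightarrow>
            loewner_le (\<lambda>h. (1 / (4 * \<nu>\<^sup>2)) *\<^sub>R HF x h) (HF u))
       \<and> (\<forall>u x. x \<in> interior K \<longrightarrow> u \<in> K \<longrightarrow>
            loewner_le (HF (x + u)) (\<lambda>h. (4 * \<nu>\<^sup>2) *\<^sub>R HF x h))"
proof -
  interpret nbar K \<nu> F gF HF using assms by unfold_locales
  show ?thesis using claim1 claim2 claim3 by blast
qed

end
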